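(* We have $\liminf_{n\to\infty}\deg(\mathscr B:\mathrm{Part}(n)\to\mathrm{Part}(n))\geq 2$. Moreover, for every positive integer $n$, \[\deg(\mathscr B:\mathrm{Part}(n)\to\mathrm{Part}(n))\leq\left\lfloor\frac{1+\sqrt{\tfrac{8}{3}n+1}}{2}\right\rfloor.\]
   Context: For finite sets $X,Y$ and $f:X\to Y$, $\deg(f)=\frac{1}{|X|}\sum_{y\in Y}|f^{-1}(y)|^2$. $\mathrm{Part}(n)$ is the set of partitions of $n$, i.e. tuples $(\lambda_1,\dots,\lambda_\ell)$ of positive integers in nonincreasing order summing to $n$. Bulgarian solitaire $\mathscr B:\mathrm{Part}(n)\to\mathrm{Part}(n)$ sends $\lambda=(\lambda_1,\ldots,\lambda_\ell)$ to the partition obtained by arranging the numbers $\ell,\lambda_1-1,\ldots,\lambda_\ell-1$ in nonincreasing order and deleting any zeros. For example, $\mathscr B(8,3,3,1,1)=(7,5,2,2)$. *)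

theory Defs
  imports "HOL-Analysis.Analysis"
begin

definition map_deg :: "('a \<Rightarrow> 'b) \<Rightarrow> 'a set \<Rightarrow> 'b set \<Rightarrow> real" where
  "map_deg f X Y = (1 / real (card X)) * (\<Sum>y\<in>Y. (real (card {x\<in>X. f x = y}))^2)"

definition Part :: "nat \<Rightarrow> nat list set" where
  "Part n = {xs. sorted (rev xs) \<and> (\<forall>x\<in>set xs. 0 < x) \<and> sum_list xs = n}"

definition bulgarian :: "nat list \<Rightarrow> nat list" where
  "bulgarian xs = filter (\<lambda>x. x \<noteq> 0) (rev (sort (length xs # map (\<lambda>x. x - 1) xs)))"

lemma "bulgarian [8,3,3,1,1] = [7,5,2,2]"
  by (simp add: bulgarian_def)

end

theory Submission
  imports Defs "HOL-Real_Asymp.Real_Asymp"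
begin


lemma sum_list_ge_length: "(\<forall>x\<in>set xs. 0 < (x::nat)) \<Longrightarrow> length xs \<le> sum_list xs"
  by (induction xs) (auto simp: Suc_le_eq)

lemma finite_Part: "finite (Part n)"
proof -
  have "Part n \<subseteq> {xs. set xs \<subseteq> {0..n} \<and> length xs \<le> n}"
  proof
    fix xs assume "xs \<in> Part n"
    then have "\<forall>x\<in>set xs. 0 < x" "sum_list xs = n" unfolding Part_def by auto
    then show "xs \<in> {xs. set xs \<subseteq> {0..n} \<and> length xs \<le> n}"
      using sum_list_ge_length[of xs] member_le_sum_list[of _ xs] by auto
  qed
  then show ?thesis by (rule finite_subset) (simp add: finite_lists_length_le)
qed

definition PM :: "nat \<Rightarrow> nat multiset set" where
  "PM n = {M. (\<forall>x\<in>#M. 0 < x) \<and> sum_mset M = n}"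

definition Lof :: "nat multiset \<Rightarrow> nat list" where
  "Lof M = rev (sorted_list_of_multiset M)"

lemma mset_Lof[simp]: "mset (Lof M) = M"
  by (simp add: Lof_def)

lemma length_Lof[simp]: "length (Lof M) = size M"
  by (metis mset_Lof size_mset)

lemma Lof_mset: "sorted (rev xs) \<Longrightarrow> Lof (mset xs) = xs"
proof -
  assume "sorted (rev xs)"
  then have "sort xs = rev xs" by (intro properties_for_sort) auto
  then show ?thesis by (simp add: Lof_def)
qed

lemma Lof_Part: "M \<in> PM n \<Longrightarrow> Lof M \<in> Part n"
  unfolding PM_def Part_def Lof_def
  by (auto simp: sum_mset_sum_list[symmetric])

lemma mset_Part: "xs \<in> Part n \<Longrightarrow> mset xs \<in> PM n"
  unfolding PM_def Part_def by (auto simp: sum_mset_sum_list)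

lemma Part_eq: "xs \<in> Part n \<Longrightarrow> ys \<in> Part m \<Longrightarrow> mset xs = mset ys \<Longrightarrow> xs = ys"
proof -
  assume a: "xs \<in> Part n" "ys \<in> Part m" "mset xs = mset ys"
  have "xs = Lof (mset xs)" using a(1) Lof_mset unfolding Part_def by auto
  also have "\<dots> = Lof (mset ys)" using a(3) by simp
  also have "\<dots> = ys" using a(2) Lof_mset unfolding Part_def by auto
  finally show ?thesis .
qed

lemma bij_mset_Part: "bij_betw mset (Part n) (PM n)"
proof (rule bij_betwI[where g = Lof])
  show "mset \<in> Part n \<rightarrow> PM n" using mset_Part by auto
  show "Lof \<in> PM n \<rightarrow> Part n" using Lof_Part by auto
  show "Lof (mset x) = x" if "x \<in> Part n" for x using that Lof_mset unfolding Part_def by auto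
  show "mset (Lof y) = y" for y by simp
qed

lemma card_Part: "card (Part n) = card (PM n)"
  using bij_betw_same_card[OF bij_mset_Part] by simp

lemma finite_PM: "finite (PM n)"
  using bij_betw_finite[OF bij_mset_Part] finite_Part by blast

definition BM :: "nat multiset \<Rightarrow> nat multiset" where
  "BM M = filter_mset (\<lambda>x. x \<noteq> 0) (add_mset (size M) (image_mset (\<lambda>x. x - 1) M))"

lemma bulgarian_Lof: "bulgarian xs = Lof (BM (mset xs))"
proof -
  define L where "L = length xs # map (\<lambda>x. x - 1) xs"
  have m: "BM (mset xs) = mset (filter (\<lambda>x. x \<noteq> 0) L)"
    unfolding BM_def L_def by (simp only: mset_filter mset.simps mset_map size_mset)
  have "Lof (BM (mset xs)) = rev (sort (filter (\<lambda>x. x \<noteq> 0) L))"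
    unfolding m Lof_def by (simp only: sorted_list_of_multiset_mset)
  also have "\<dots> = filter (\<lambda>x. x \<noteq> 0) (rev (sort L))"
    by (simp only: filter_sort[symmetric] rev_filter)
  also have "\<dots> = bulgarian xs"
    unfolding bulgarian_def L_def ..
  finally show ?thesis by simp
qed

lemma mset_bulgarian: "mset (bulgarian xs) = BM (mset xs)"
  by (simp add: bulgarian_Lof)

lemma sum_mset_minus1: "(\<forall>x\<in>#M. 0 < (x::nat)) \<Longrightarrow> sum_mset (image_mset (\<lambda>x. x - 1) M) + size M = sum_mset M"
  by (induction M) auto

lemma sum_mset_filter_nz: "sum_mset (filter_mset (\<lambda>x. x \<noteq> 0) (M::nat multiset)) = sum_mset M"
  by (induction M) auto

lemma BM_PM: "M \<in> PM n \<Longrightarrow> BM M \<in> PM n"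
proof -
  assume M: "M \<in> PM n"
  have "sum_mset (BM M) = sum_mset (add_mset (size M) (image_mset (\<lambda>x. x - 1) M))"
    unfolding BM_def by (rule sum_mset_filter_nz)
  also have "\<dots> = n" using sum_mset_minus1[of M] M unfolding PM_def by simp
  finally show ?thesis unfolding PM_def BM_def by auto
qed

lemma bulgarian_Part: "xs \<in> Part n \<Longrightarrow> bulgarian xs \<in> Part n"
  by (simp add: bulgarian_Lof Lof_Part BM_PM mset_Part)

lemma bulgarian_eq_iff: "bulgarian xs = bulgarian ys \<longleftrightarrow> BM (mset xs) = BM (mset ys)"
proof
  assume "bulgarian xs = bulgarian ys"
  then have "mset (bulgarian xs) = mset (bulgarian ys)" by simp
  then show "BM (mset xs) = BM (mset ys)" by (simp only: mset_bulgarian)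
next
  assume "BM (mset xs) = BM (mset ys)"
  then show "bulgarian xs = bulgarian ys" by (simp only: bulgarian_Lof)
qed



lemma sum_sq_fibers:
  assumes "finite X" "finite Y" "f ` X \<subseteq> Y"
  shows "(\<Sum>y\<in>Y. (real (card {x\<in>X. f x = y}))^2)
         = real (card {(x,x'). x \<in> X \<and> x' \<in> X \<and> f x = f x'})"
proof -
  let ?F = "\<lambda>y. {x\<in>X. f x = y}"
  have eq: "{(x,x'). x \<in> X \<and> x' \<in> X \<and> f x = f x'} = (\<Union>y\<in>Y. ?F y \<times> ?F y)"
    using assms(3) by auto
  have "card (\<Union>y\<in>Y. ?F y \<times> ?F y) = (\<Sum>y\<in>Y. card (?F y \<times> ?F y))"
    by (rule card_UN_disjoint) (use assms(1,2) in auto)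
  then show ?thesis by (simp add: eq card_cartesian_product power2_eq_square)
qed

lemma sum_fibers_le:
  assumes "finite X" "finite Y"
  shows "(\<Sum>y\<in>Y. card {x\<in>X. f x = y}) \<le> card X"
proof -
  let ?F = "\<lambda>y. {x\<in>X. f x = y}"
  have "(\<Sum>y\<in>Y. card (?F y)) = card (\<Union>y\<in>Y. ?F y)"
    by (rule card_UN_disjoint[symmetric]) (use assms in auto)
  also have "\<dots> \<le> card X" by (rule card_mono) (use assms in auto)
  finally show ?thesis .
qed

lemma count_one_size:
  assumes "\<forall>x\<in>#M. 0 < (x::nat)"
  shows "count M 1 + size (filter_mset (\<lambda>x. x - 1 \<noteq> 0) M) = size M"
proof -
  have "filter_mset (\<lambda>x. \<not> (x - 1 \<noteq> 0)) M = filter_mset (\<lambda>x. x = 1) M"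
    by (rule filter_mset_cong) (use assms in auto)
  also have "\<dots> = replicate_mset (count M 1) 1" by (simp add: filter_eq_replicate_mset)
  finally have e: "filter_mset (\<lambda>x. \<not> (x - 1 \<noteq> 0)) M = replicate_mset (count M 1) 1" .
  have "size M = size (filter_mset (\<lambda>x. x - 1 \<noteq> 0) M) + size (filter_mset (\<lambda>x. \<not> (x - 1 \<noteq> 0)) M)"
  proof -
    have "size M = size (filter_mset (\<lambda>x. x - 1 \<noteq> 0) M + filter_mset (\<lambda>x. \<not> (x - 1 \<noteq> 0)) M)"
      by (simp only: multiset_partition[symmetric])
    then show ?thesis by (simp only: size_union)
  qed
  moreover have "size (filter_mset (\<lambda>x. \<not> (x - 1 \<noteq> 0)) M) = count M 1"
    by (simp only: e size_replicate_mset)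
  ultimately show ?thesis by linarith
qed

lemma BM_inj_size:
  assumes p1: "\<forall>x\<in>#M1. 0 < (x::nat)" and p2: "\<forall>x\<in>#M2. 0 < (x::nat)"
    and s: "size M1 = size M2" and b: "BM M1 = BM M2"
  shows "M1 = M2"
proof (cases "size M1 = 0")
  case True
  then show ?thesis using s by simp
next
  case False
  let ?H = "\<lambda>M::nat multiset. filter_mset (\<lambda>x. x - 1 \<noteq> 0) M"
  have BMe: "BM M = add_mset (size M) (image_mset (\<lambda>x. x - 1) (?H M))" if "size M \<noteq> 0" for M
    unfolding BM_def filter_mset_add_mset filter_mset_image_mset using that by simp
  have "image_mset (\<lambda>x. x - 1) (?H M1) = image_mset (\<lambda>x. x - 1) (?H M2)"
    using b BMe[of M1] BMe[of M2] False s by simp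
  then have "image_mset (\<lambda>x. x + 1) (image_mset (\<lambda>x. x - 1) (?H M1))
           = image_mset (\<lambda>x. x + 1) (image_mset (\<lambda>x. x - 1) (?H M2))" by simp
  moreover have "image_mset (\<lambda>x. x + 1) (image_mset (\<lambda>x. x - 1) (?H M)) = ?H M" for M
  proof -
    have "image_mset (\<lambda>x. x + 1) (image_mset (\<lambda>x. x - 1) (?H M)) = image_mset (\<lambda>x. x - 1 + 1) (?H M)"
      by (simp add: image_mset.compositionality comp_def)
    also have "\<dots> = image_mset id (?H M)" by (rule image_mset_cong) auto
    finally show ?thesis by simp
  qed
  ultimately have H: "?H M1 = ?H M2" by simp
  have c1: "count M1 1 = count M2 1"
    using count_one_size[OF p1] count_one_size[OF p2] s H by simp
  show ?thesis
  proof (rule multiset_eqI)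
    fix x
    show "count M1 x = count M2 x"
    proof (cases "x = 0")
      case True
      then show ?thesis using p1 p2 by (metis count_eq_zero_iff less_irrefl)
    next
      case x0: False
      show ?thesis
      proof (cases "x = 1")
        case True then show ?thesis using c1 by simp
      next
        case False
        then have "x - 1 \<noteq> 0" using x0 by simp
        then have "count (?H M1) x = count M1 x" "count (?H M2) x = count M2 x" by simp_all
        then show ?thesis using H by metis
      qed
    qed
  qed
qed

lemma sum_set_le_sum_list: "sum id (set xs) \<le> sum_list (xs :: nat list)"
proof (induction xs)
  case Nil then show ?case by simp
next
  case (Cons x xs)
  have "sum id (set (x # xs)) \<le> x + sum id (set xs)"
    by (cases "x \<in> set xs") (simp_all add: insert_absorb)
  then show ?case using Cons by simp
qed

lemma sum_distinct_lower:
  fixes T :: "nat set"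
  assumes "finite T" "\<forall>v\<in>T. m \<le> v"
  shows "card T * (2*m + card T - 1) \<le> 2 * sum id T"
  using assms
proof (induction "card T" arbitrary: T)
  case 0 then show ?case by simp
next
  case (Suc c)
  then have ne: "T \<noteq> {}" by auto
  define M where "M = Max T"
  have MT: "M \<in> T" using Max_in[OF Suc.prems(1) ne] M_def by simp
  define T' where "T' = T - {M}"
  have cT': "card T' = c" using Suc.hyps(2) MT T'_def Suc.prems(1) by simp
  have fT': "finite T'" using Suc.prems(1) T'_def by simp
  have IH: "c * (2*m + c - 1) \<le> 2 * sum id T'"
    using Suc.hyps(1)[of T'] cT' fT' Suc.prems(2) T'_def by auto
  have "T \<subseteq> {m..M}" using Suc.prems M_def by auto
  then have "card T \<le> card {m..M}" by (rule card_mono[rotated]) simp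
  then have Mge: "m + c \<le> M" using Suc.hyps(2) by simp
  have sT: "sum id T = M + sum id T'"
    using MT Suc.prems(1) T'_def by (simp add: sum.remove)
  have "card T * (2*m + card T - 1) = (c+1) * (2*m + c)" using Suc.hyps(2) by simp
  also have "\<dots> = 2*(m + c) + c * (2*m + c - 1)" by (cases c) (simp_all add: algebra_simps)
  also have "\<dots> \<le> 2 * M + 2 * sum id T'" using add_mono[OF mult_le_mono2[OF Mge, of 2] IH] .
  also have "\<dots> = 2 * sum id T" using sT by simp
  finally show ?case .
qed

lemma T_bound:
  assumes y: "y \<in> Part n"
  shows "3 * card {v \<in> set y. length y \<le> v + 1} * (card {v \<in> set y. length y \<le> v + 1} - 1) \<le> 2 * n"
proof -
  define T where "T = {v \<in> set y. length y \<le> v + 1}"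
  define c where "c = card T"
  have fT: "finite T" unfolding T_def by simp
  have "c \<le> card (set y)" unfolding c_def T_def by (rule card_mono) auto
  also have "\<dots> \<le> length y" by (rule card_length)
  finally have cl: "c \<le> length y" .
  have lo: "\<forall>v\<in>T. c - 1 \<le> v" using cl unfolding T_def by auto
  have "sum id T \<le> sum id (set y)" unfolding T_def by (rule sum_mono2) auto
  also have "\<dots> \<le> sum_list y" by (rule sum_set_le_sum_list)
  also have "\<dots> = n" using y unfolding Part_def by simp
  finally have sT: "sum id T \<le> n" .
  have "c * (2*(c-1) + c - 1) \<le> 2 * sum id T"
    using sum_distinct_lower[OF fT lo] unfolding c_def by simp
  moreover have "c * (2*(c-1) + c - 1) = 3 * c * (c - 1)" by (cases c) (simp_all add: algebra_simps)
  ultimately have "3 * c * (c - 1) \<le> 2 * n" using sT by linarith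
  then show ?thesis unfolding c_def T_def .
qed


lemma floor_bound:
  fixes c n :: nat
  assumes "3 * c * (c - 1) \<le> 2 * n"
  shows "real c \<le> of_int \<lfloor>(1 + sqrt (8 / 3 * real n + 1)) / 2\<rfloor>"
proof -
  have "real c \<le> (1 + sqrt (8 / 3 * real n + 1)) / 2"
  proof (cases "c = 0")
    case True then show ?thesis by simp
  next
    case False
    then have "real (3 * c * (c - 1)) \<le> real (2 * n)" using assms by linarith
    then have "3 * real c * (real c - 1) \<le> 2 * real n" using False by (simp add: of_nat_diff)
    then have "(2 * real c - 1)^2 \<le> 8 / 3 * real n + 1" by (simp add: power2_eq_square algebra_simps)
    then have "2 * real c - 1 \<le> sqrt (8 / 3 * real n + 1)" by (rule real_le_rsqrt)
    then show ?thesis by simp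
  qed
  then have "of_int (int c) \<le> (1 + sqrt (8 / 3 * real n + 1)) / 2" by simp
  then have "int c \<le> \<lfloor>(1 + sqrt (8 / 3 * real n + 1)) / 2\<rfloor>" by (simp only: le_floor_iff)
  then have "(of_int (int c) :: real) \<le> of_int \<lfloor>(1 + sqrt (8 / 3 * real n + 1)) / 2\<rfloor>"
    by (simp only: of_int_le_iff)
  then show ?thesis by simp
qed

lemma fiber_le_T:
  assumes n: "1 \<le> n" and y: "y \<in> Part n"
  shows "card {x \<in> Part n. bulgarian x = y} \<le> card {v \<in> set y. length y \<le> v + 1}"
proof (rule card_inj_on_le[where f = length])
  show "inj_on length {x \<in> Part n. bulgarian x = y}"
  proof (rule inj_onI)
    fix x1 x2 assume a: "x1 \<in> {x \<in> Part n. bulgarian x = y}" "x2 \<in> {x \<in> Part n. bulgarian x = y}"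
      "length x1 = length x2"
    have "BM (mset x1) = BM (mset x2)" using a bulgarian_eq_iff by auto
    moreover have "\<forall>x\<in>#mset x1. 0 < x" "\<forall>x\<in>#mset x2. 0 < x" using a unfolding Part_def by auto
    ultimately have "mset x1 = mset x2" using BM_inj_size[of "mset x1" "mset x2"] a(3) by simp
    then show "x1 = x2" using Part_eq a by auto
  qed
  show "length ` {x \<in> Part n. bulgarian x = y} \<subseteq> {v \<in> set y. length y \<le> v + 1}"
  proof
    fix l assume "l \<in> length ` {x \<in> Part n. bulgarian x = y}"
    then obtain x where x: "x \<in> Part n" "bulgarian x = y" "l = length x" by auto
    have "x \<noteq> []" using x(1) n unfolding Part_def by auto
    then have l0: "length x \<noteq> 0" by simp
    have my: "mset y = BM (mset x)" using x(2) mset_bulgarian by metis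
    have "length x \<in># BM (mset x)" unfolding BM_def using l0 by simp
    then have "l \<in> set y" using my x(3) by (metis set_mset_mset)
    moreover have "length y \<le> l + 1"
    proof -
      have "length y = size (BM (mset x))" using my by (metis size_mset)
      also have "\<dots> \<le> size (add_mset (size (mset x)) (image_mset (\<lambda>x. x - 1) (mset x)))"
        unfolding BM_def by (rule size_filter_mset_lesseq)
      finally show ?thesis using x(3) by simp
    qed
    ultimately show "l \<in> {v \<in> set y. length y \<le> v + 1}" by simp
  qed
  show "finite {v \<in> set y. length y \<le> v + 1}" by simp
qed

theorem upper_bound:
  assumes n: "1 \<le> n"
  shows "map_deg bulgarian (Part n) (Part n) \<le> of_int \<lfloor>(1 + sqrt (8 / 3 * real n + 1)) / 2\<rfloor>"
proof -
  define D :: real where "D = of_int \<lfloor>(1 + sqrt (8 / 3 * real n + 1)) / 2\<rfloor>"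
  define fb where "fb = (\<lambda>y. real (card {x \<in> Part n. bulgarian x = y}))"
  have fbD: "fb y \<le> D" if "y \<in> Part n" for y
  proof -
    have "card {x \<in> Part n. bulgarian x = y} \<le> card {v \<in> set y. length y \<le> v + 1}"
      by (rule fiber_le_T[OF n that])
    moreover have "real (card {v \<in> set y. length y \<le> v + 1}) \<le> D"
      unfolding D_def by (rule floor_bound[OF T_bound[OF that]])
    ultimately show ?thesis unfolding fb_def by linarith
  qed
  have D0: "0 \<le> D"
  proof -
    have "0 \<le> (1 + sqrt (8 / 3 * real n + 1)) / 2" by simp
    then show ?thesis unfolding D_def by simp
  qed
  have "[n] \<in> Part n" using n unfolding Part_def by auto
  then have P0: "0 < card (Part n)" using finite_Part card_gt_0_iff by blast
  have "(\<Sum>y\<in>Part n. (fb y)^2) \<le> (\<Sum>y\<in>Part n. D * fb y)"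
  proof (rule sum_mono)
    fix y assume "y \<in> Part n"
    then have "fb y * fb y \<le> fb y * D" using fbD by (intro mult_left_mono) (auto simp: fb_def)
    then show "(fb y)^2 \<le> D * fb y" by (simp add: power2_eq_square mult.commute)
  qed
  also have "\<dots> = D * (\<Sum>y\<in>Part n. fb y)" by (rule sum_distrib_left[symmetric])
  also have "\<dots> \<le> D * real (card (Part n))"
  proof (rule mult_left_mono[OF _ D0])
    have "(\<Sum>y\<in>Part n. card {x \<in> Part n. bulgarian x = y}) \<le> card (Part n)"
      by (rule sum_fibers_le) (simp_all add: finite_Part)
    then have "real (\<Sum>y\<in>Part n. card {x \<in> Part n. bulgarian x = y}) \<le> real (card (Part n))"
      by (simp only: of_nat_le_iff)
    then show "(\<Sum>y\<in>Part n. fb y) \<le> real (card (Part n))"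
      unfolding fb_def by simp
  qed
  finally have "(\<Sum>y\<in>Part n. (fb y)^2) \<le> D * real (card (Part n))" .
  then have "(1 / real (card (Part n))) * (\<Sum>y\<in>Part n. (fb y)^2) \<le> D"
    using P0 by (simp add: field_simps)
  then show ?thesis unfolding map_deg_def fb_def D_def .
qed



definition FR :: "nat multiset \<Rightarrow> nat multiset" where
  "FR R = filter_mset (\<lambda>x. 3 \<le> x) R"

definition Mw :: "nat multiset \<Rightarrow> nat multiset" where
  "Mw R = add_mset (size (FR R) + 3 + count R 2 + count R 1)
            (image_mset (\<lambda>x. x - 1) (FR R) + replicate_mset (count R 2) 1)"

definition Mv :: "nat multiset \<Rightarrow> nat multiset" where
  "Mv R = add_mset (size (FR R) + 2 + count R 2)
            (image_mset (\<lambda>x. x - 1) (FR R) + replicate_mset (count R 2 + count R 1 + 1) 1)"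

lemma R_decomp:
  assumes "\<forall>x\<in>#R. 0 < (x::nat)"
  shows "R = FR R + replicate_mset (count R 2) 2 + replicate_mset (count R 1) 1"
proof (rule multiset_eqI)
  fix x
  show "count R x = count (FR R + replicate_mset (count R 2) 2 + replicate_mset (count R 1) 1) x"
  proof (cases "x = 0")
    case True
    then have "count R x = 0" using assms by (metis count_eq_zero_iff less_irrefl)
    then show ?thesis using True by (simp add: FR_def)
  next
    case False
    then show ?thesis by (cases "x = 1"; cases "x = 2") (auto simp: FR_def)
  qed
qed

lemma sum_R: "\<forall>x\<in>#R. 0 < (x::nat) \<Longrightarrow> sum_mset R = sum_mset (FR R) + 2 * count R 2 + count R 1"
  by (subst R_decomp) (auto simp: sum_mset_replicate_mset)

lemma FR_pos: "\<forall>x\<in>#FR R. 3 \<le> x"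
  by (simp add: FR_def)

lemma sum_FR_minus1: "sum_mset (image_mset (\<lambda>x. x - 1) (FR R)) + size (FR R) = sum_mset (FR R)"
  by (rule sum_mset_minus1) (use FR_pos in force)

lemma size_Mw: "size (Mw R) = size (FR R) + count R 2 + 1"
  by (simp add: Mw_def)

lemma size_Mv: "size (Mv R) = size (FR R) + count R 2 + count R 1 + 2"
  by (simp add: Mv_def)

lemma Mw_PM: assumes "R \<in> PM m" shows "Mw R \<in> PM (m + 3)"
proof -
  have p: "\<forall>x\<in>#R. 0 < x" and s: "sum_mset R = m" using assms unfolding PM_def by auto
  have "\<forall>x\<in>#Mw R. 0 < x" unfolding Mw_def using FR_pos[of R] by auto
  moreover have "sum_mset (Mw R) = m + 3"
    using sum_R[OF p] s sum_FR_minus1[of R] unfolding Mw_def by (simp add: sum_mset_replicate_mset)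
  ultimately show ?thesis unfolding PM_def by simp
qed

lemma Mv_PM: assumes "R \<in> PM m" shows "Mv R \<in> PM (m + 3)"
proof -
  have p: "\<forall>x\<in>#R. 0 < x" and s: "sum_mset R = m" using assms unfolding PM_def by auto
  have "\<forall>x\<in>#Mv R. 0 < x" unfolding Mv_def using FR_pos[of R] by auto
  moreover have "sum_mset (Mv R) = m + 3"
    using sum_R[OF p] s sum_FR_minus1[of R] unfolding Mv_def by (simp add: sum_mset_replicate_mset)
  ultimately show ?thesis unfolding PM_def by simp
qed

lemma filter_nz_FR: "filter_mset ((<) 0) {#x - Suc 0. x \<in># {#x - Suc 0. x \<in># FR R#}#} = {#x - Suc (Suc 0). x \<in># FR R#}"
  unfolding FR_def by (induction R) auto

lemma filter_replicate: "filter_mset P (replicate_mset n x) = (if P x then replicate_mset n x else {#})"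
  by (induction n) auto

lemma BM_Mv_Mw: "BM (Mv R) = BM (Mw R)"
proof -
  let ?G = "{#x - Suc (Suc 0). x \<in># FR R#}"
  have "BM (Mv R) = add_mset (size (FR R) + count R 2 + count R 1 + 2) (add_mset (size (FR R) + 1 + count R 2) ?G)"
    unfolding BM_def size_Mv unfolding Mv_def
    by (simp add: filter_nz_FR filter_replicate)
  moreover have "BM (Mw R) = add_mset (size (FR R) + count R 2 + 1) (add_mset (size (FR R) + 2 + count R 2 + count R 1) ?G)"
    unfolding BM_def size_Mw unfolding Mw_def
    by (simp add: filter_nz_FR filter_replicate)
  ultimately show ?thesis by (simp add: add_mset_commute algebra_simps)
qed

lemma count_Mw_1: "count (Mw R) 1 = count R 2"
proof -
  have "count (image_mset (\<lambda>x. x - 1) (FR R)) 1 = 0"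
    using FR_pos[of R] by (auto simp: count_eq_zero_iff)
  then show ?thesis unfolding Mw_def by simp
qed

lemma image_plus_minus: "image_mset (\<lambda>x. x + 1) (image_mset (\<lambda>x. x - 1) (FR R)) = FR R"
proof -
  have "image_mset (\<lambda>x. x + 1) (image_mset (\<lambda>x. x - 1) (FR R)) = image_mset (\<lambda>x. x - 1 + 1) (FR R)"
    by (simp add: image_mset.compositionality comp_def)
  also have "\<dots> = image_mset id (FR R)" by (rule image_mset_cong) (use FR_pos[of R] in force)
  finally show ?thesis by simp
qed

lemma Mv_Mw_inj:
  assumes p1: "\<forall>x\<in>#R1. 0 < (x::nat)" and p2: "\<forall>x\<in>#R2. 0 < (x::nat)"
    and v: "Mv R1 = Mv R2" and w: "Mw R1 = Mw R2"
  shows "R1 = R2"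
proof -
  have a: "count R1 2 = count R2 2" using w count_Mw_1 by metis
  have k: "size (FR R1) = size (FR R2)" using arg_cong[OF w, of size] a by (simp add: size_Mw)
  have b: "count R1 1 = count R2 1" using arg_cong[OF v, of size] a k by (simp add: size_Mv)
  have "image_mset (\<lambda>x. x - 1) (FR R1) = image_mset (\<lambda>x. x - 1) (FR R2)"
    using w a b k unfolding Mw_def by simp
  then have "FR R1 = FR R2" using image_plus_minus by metis
  then show ?thesis using R_decomp[OF p1] R_decomp[OF p2] a b by metis
qed

lemma lower_pairs:
  assumes n: "3 \<le> n"
  shows "card (Part n) + 2 * card (Part (n-3))
         \<le> card {(x,x'). x \<in> Part n \<and> x' \<in> Part n \<and> bulgarian x = bulgarian x'}"
proof -
  define E where "E = {(x,x'). x \<in> Part n \<and> x' \<in> Part n \<and> bulgarian x = bulgarian x'}"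
  define f1 where "f1 = (\<lambda>r. (Lof (Mv (mset r)), Lof (Mw (mset r))))"
  define f2 where "f2 = (\<lambda>r. (Lof (Mw (mset r)), Lof (Mv (mset r))))"
  define D where "D = (\<lambda>x. (x,x)) ` Part n"
  have nn: "n - 3 + 3 = n" using n by simp
  have inPM: "Mv (mset r) \<in> PM n" "Mw (mset r) \<in> PM n" if "r \<in> Part (n-3)" for r
    using Mv_PM[OF mset_Part[OF that]] Mw_PM[OF mset_Part[OF that]] nn by simp_all
  have bb: "bulgarian (Lof (Mv (mset r))) = bulgarian (Lof (Mw (mset r)))" for r
    by (simp add: bulgarian_eq_iff BM_Mv_Mw)
  have DE: "D \<subseteq> E" unfolding D_def E_def by auto
  have A1E: "f1 ` Part (n-3) \<subseteq> E" unfolding E_def f1_def using inPM bb Lof_Part by auto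
  have A2E: "f2 ` Part (n-3) \<subseteq> E" unfolding E_def f2_def using inPM bb Lof_Part by auto
  have finE: "finite E"
  proof -
    have "E \<subseteq> Part n \<times> Part n" unfolding E_def by auto
    then show ?thesis using finite_Part by (metis finite_SigmaI finite_subset)
  qed
  have inj1: "inj_on f1 (Part (n-3))"
  proof (rule inj_onI)
    fix r1 r2 assume r: "r1 \<in> Part (n-3)" "r2 \<in> Part (n-3)" "f1 r1 = f1 r2"
    then have "Mv (mset r1) = Mv (mset r2)" "Mw (mset r1) = Mw (mset r2)" unfolding f1_def
      by (metis mset_Lof prod.inject)+
    moreover have "\<forall>x\<in>#mset r1. 0 < x" "\<forall>x\<in>#mset r2. 0 < x" using r unfolding Part_def by auto
    ultimately have "mset r1 = mset r2" using Mv_Mw_inj by blast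
    then show "r1 = r2" using Part_eq r by blast
  qed
  have inj2: "inj_on f2 (Part (n-3))"
  proof (rule inj_onI)
    fix r1 r2 assume r: "r1 \<in> Part (n-3)" "r2 \<in> Part (n-3)" "f2 r1 = f2 r2"
    then have "Mv (mset r1) = Mv (mset r2)" "Mw (mset r1) = Mw (mset r2)" unfolding f2_def
      by (metis mset_Lof prod.inject)+
    moreover have "\<forall>x\<in>#mset r1. 0 < x" "\<forall>x\<in>#mset r2. 0 < x" using r unfolding Part_def by auto
    ultimately have "mset r1 = mset r2" using Mv_Mw_inj by blast
    then show "r1 = r2" using Part_eq r by blast
  qed
  have cD: "card D = card (Part n)" unfolding D_def by (rule card_image) (simp add: inj_on_def)
  have c1: "card (f1 ` Part (n-3)) = card (Part (n-3))" by (rule card_image[OF inj1])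
  have c2: "card (f2 ` Part (n-3)) = card (Part (n-3))" by (rule card_image[OF inj2])
  have lenD: "\<forall>p\<in>D. length (fst p) = length (snd p)" unfolding D_def by auto
  have len1: "\<forall>p\<in>f1 ` Part (n-3). length (snd p) < length (fst p)"
    unfolding f1_def by (auto simp: size_Mv size_Mw)
  have len2: "\<forall>p\<in>f2 ` Part (n-3). length (fst p) < length (snd p)"
    unfolding f2_def by (auto simp: size_Mv size_Mw)
  have d1: "D \<inter> f1 ` Part (n-3) = {}" using lenD len1 by fastforce
  have d2: "(D \<union> f1 ` Part (n-3)) \<inter> f2 ` Part (n-3) = {}" using lenD len1 len2 by fastforce
  have fD: "finite D" unfolding D_def using finite_Part by simp
  have f1f: "finite (f1 ` Part (n-3))" using finite_Part by simp
  have f2f: "finite (f2 ` Part (n-3))" using finite_Part by simp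
  have "card (D \<union> f1 ` Part (n-3) \<union> f2 ` Part (n-3))
        = card D + card (f1 ` Part (n-3)) + card (f2 ` Part (n-3))"
    using card_Un_disjoint[OF fD f1f d1] card_Un_disjoint[OF _ f2f d2] fD f1f by simp
  also have "\<dots> = card (Part n) + 2 * card (Part (n-3))" using cD c1 c2 by simp
  finally have "card (Part n) + 2 * card (Part (n-3)) = card (D \<union> f1 ` Part (n-3) \<union> f2 ` Part (n-3))" by simp
  also have "\<dots> \<le> card E" by (rule card_mono[OF finE]) (use DE A1E A2E in blast)
  finally show ?thesis unfolding E_def .
qed




definition Has1 :: "nat \<Rightarrow> nat multiset set" where "Has1 n = {M \<in> PM n. 1 \<in># M}"
definition QP :: "nat \<Rightarrow> nat multiset set" where "QP n = {M \<in> PM n. 1 \<notin># M}"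

lemma card_Has1:
  assumes n: "1 \<le> n" shows "card (Has1 n) = card (PM (n-1))"
proof -
  have "bij_betw (add_mset 1) (PM (n-1)) (Has1 n)"
  proof (rule bij_betwI[where g = "\<lambda>M. M - {#1#}"])
    show "add_mset 1 \<in> PM (n - 1) \<rightarrow> Has1 n"
      using n unfolding PM_def Has1_def by auto
    show "(\<lambda>M. M - {#1#}) \<in> Has1 n \<rightarrow> PM (n - 1)"
    proof
      fix M assume M: "M \<in> Has1 n"
      then have M1: "1 \<in># M" "M \<in> PM n" unfolding Has1_def by auto
      have "sum_mset M = 1 + sum_mset (M - {#1#})" using sum_mset.remove[OF M1(1)] .
      moreover have "sum_mset M = n" using M1(2) unfolding PM_def by simp
      ultimately have "sum_mset (M - {#1#}) = n - 1" by linarith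
      moreover have "\<forall>x\<in>#M - {#1#}. 0 < x" using M1(2) unfolding PM_def by (blast dest: in_diffD)
      ultimately show "M - {#1#} \<in> PM (n - 1)" unfolding PM_def by simp
    qed
    show "add_mset 1 x - {#1#} = x" for x by simp
    show "add_mset 1 (y - {#1#}) = y" if "y \<in> Has1 n" for y using that unfolding Has1_def by simp
  qed
  then show ?thesis by (simp add: bij_betw_same_card)
qed

lemma card_PM_split: "card (PM n) = card (QP n) + card (Has1 n)"
proof -
  have "PM n = QP n \<union> Has1 n" unfolding QP_def Has1_def by auto
  moreover have "QP n \<inter> Has1 n = {}" unfolding QP_def Has1_def by auto
  moreover have "finite (QP n)" "finite (Has1 n)"
    using finite_PM unfolding QP_def Has1_def by auto
  ultimately show ?thesis by (simp add: card_Un_disjoint)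
qed

lemma mem_le_sum_mset: "(v::nat) \<in># M \<Longrightarrow> v \<le> sum_mset M"
  using sum_mset.remove[of v M] by simp



lemma sum_card_set_QP:
  assumes n: "1 \<le> n"
  shows "(\<Sum>M\<in>QP n. card (set_mset M)) \<le> card (PM (n-1))"
proof -
  define Phi where "Phi = (\<lambda>(M, j). M - {#j#} + replicate_mset j (1::nat))"
  define S where "S = Sigma (QP n) set_mset"
  have fQ: "finite (QP n)" using finite_PM unfolding QP_def by auto
  have cS: "card S = (\<Sum>M\<in>QP n. card (set_mset M))"
    unfolding S_def using fQ by simp
  have j2: "2 \<le> j" if "(M, j) \<in> S" for M j
  proof -
    have "j \<in># M" "1 \<notin># M" "\<forall>x\<in>#M. 0 < x" using that unfolding S_def QP_def PM_def by auto
    then show ?thesis by (metis One_nat_def Suc_1 Suc_leI le_neq_implies_less)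
  qed
  have img: "Phi ` S \<subseteq> Has1 n"
  proof
    fix z assume "z \<in> Phi ` S"
    then obtain M j where Mj: "(M, j) \<in> S" "z = Phi (M, j)" by auto
    have jM: "j \<in># M" and MP: "M \<in> PM n" using Mj unfolding S_def QP_def by auto
    have "sum_mset M = j + sum_mset (M - {#j#})" using jM by (rule sum_mset.remove)
    then have "sum_mset z = n" using MP Mj(2) unfolding Phi_def PM_def
      by (simp add: sum_mset_replicate_mset)
    moreover have "\<forall>x\<in>#z. 0 < x" using MP Mj(2) unfolding Phi_def PM_def by (auto dest: in_diffD)
    moreover have "1 \<in># z" using j2[OF Mj(1)] Mj(2) unfolding Phi_def by simp
    ultimately show "z \<in> Has1 n" unfolding Has1_def PM_def by simp
  qed
  have inj: "inj_on Phi S"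
  proof (rule inj_onI)
    fix p1 p2 assume p: "p1 \<in> S" "p2 \<in> S" "Phi p1 = Phi p2"
    obtain M1 j1 where p1: "p1 = (M1, j1)" by force
    obtain M2 j2 where p2: "p2 = (M2, j2)" by force
    have c0: "count (M1 - {#j1#}) 1 = 0" "count (M2 - {#j2#}) 1 = 0"
      using p p1 p2 unfolding S_def QP_def by (auto simp: count_eq_zero_iff dest: in_diffD)
    have "count (Phi p1) 1 = j1" "count (Phi p2) 1 = j2"
      using c0 unfolding Phi_def p1 p2 by simp_all
    then have jj: "j1 = j2" using p(3) by simp
    then have "M1 - {#j1#} = M2 - {#j1#}" using p(3) unfolding Phi_def p1 p2 by simp
    moreover have "j1 \<in># M1" "j1 \<in># M2" using p p1 p2 jj unfolding S_def by auto
    ultimately have "M1 = M2" by (metis insert_DiffM)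
    then show "p1 = p2" using p1 p2 jj by simp
  qed
  have "card S \<le> card (Has1 n)"
    by (rule card_inj_on_le[OF inj img]) (use finite_PM in \<open>simp add: Has1_def\<close>)
  then show ?thesis using cS card_Has1[OF n] by simp
qed



definition Bset :: "nat \<Rightarrow> nat multiset set" where
  "Bset n = {M \<in> PM n. card (set_mset M) < 4}"

lemma msum_count: "(\<Sum>v\<in>set_mset M. replicate_mset (count M v) v) = M"
proof (rule multiset_eqI)
  fix x
  have "count (\<Sum>v\<in>set_mset M. replicate_mset (count M v) v) x
        = (\<Sum>v\<in>set_mset M. if v = x then count M v else 0)"
    by (simp add: count_sum)
  also have "\<dots> = (if x \<in> set_mset M then count M x else 0)"
    by (simp add: sum.delta')
  also have "\<dots> = count M x" by (simp add: count_eq_zero_iff)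
  finally show "count (\<Sum>v\<in>set_mset M. replicate_mset (count M v) v) x = count M x" .
qed

lemma card_Bset: "card (Bset n) \<le> (n+1)^6"
proof -
  define G where "G = (\<lambda>ps. sum_list (map (\<lambda>(v,c). replicate_mset c v) ps) :: nat multiset)"
  define A where "A = {ps. set ps \<subseteq> {0..n} \<times> {0..n} \<and> length ps = 3}"
  have c2: "card ({0..n} \<times> {0..n}) = (n+1)^2" by (simp add: card_cartesian_product power2_eq_square)
  have "card A = ((n+1)^2)^3" unfolding A_def by (simp only: card_lists_length_eq[OF finite_SigmaI[OF finite_atLeastAtMost finite_atLeastAtMost]] c2)
  then have cA: "card A = (n+1)^6" by (simp add: power_mult[symmetric])
  have fA: "finite A" unfolding A_def by (simp add: finite_lists_length_eq)
  have sub: "Bset n \<subseteq> G ` A"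
  proof
    fix M assume M: "M \<in> Bset n"
    then have pos: "\<forall>x\<in>#M. 0 < x" and sM: "sum_mset M = n" and cM: "card (set_mset M) < 4"
      unfolding Bset_def PM_def by auto
    define vs where "vs = sorted_list_of_set (set_mset M)"
    have dvs: "distinct vs" and svs: "set vs = set_mset M" and lvs: "length vs = card (set_mset M)"
      unfolding vs_def by simp_all
    define ps where "ps = map (\<lambda>v. (v, count M v)) vs @ replicate (3 - length vs) (0,0)"
    have z: "sum_list (replicate k ({#}::nat multiset)) = {#}" for k by (induction k) auto
    have "G ps = sum_list (map (\<lambda>v. replicate_mset (count M v) v) vs)"
      unfolding G_def ps_def by (simp add: comp_def z)
    also have "\<dots> = (\<Sum>v\<in>set_mset M. replicate_mset (count M v) v)"
      using dvs svs by (simp add: sum_list_distinct_conv_sum_set)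
    also have "\<dots> = M" by (rule msum_count)
    finally have GM: "G ps = M" .
    have szM: "size M \<le> n"
      using sum_mset_minus1[OF pos] sM by linarith
    have "set ps \<subseteq> {0..n} \<times> {0..n}"
    proof
      fix p assume "p \<in> set ps"
      then consider v where "v \<in># M" "p = (v, count M v)" | "p = (0,0)"
        unfolding ps_def using svs by (auto split: if_splits)
      then show "p \<in> {0..n} \<times> {0..n}"
      proof cases
        case 1
        then have "v \<le> n" using mem_le_sum_mset sM by metis
        moreover have "count M v \<le> n" using count_le_size[of M v] szM by linarith
        ultimately show ?thesis using 1 by simp
      qed simp
    qed
    moreover have "length ps = 3" unfolding ps_def using lvs cM by simp
    ultimately have "ps \<in> A" unfolding A_def by simp
    then show "M \<in> G ` A" using GM by force
  qed
  have "card (Bset n) \<le> card (G ` A)" by (rule card_mono) (use fA sub in auto)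
  also have "\<dots> \<le> card A" using fA by (rule card_image_le)
  finally show ?thesis using cA by simp
qed



lemma recur:
  assumes n: "1 \<le> n"
  shows "4 * card (PM n) \<le> 5 * card (PM (n-1)) + 4 * (n+1)^6"
proof -
  have fQ: "finite (QP n)" using finite_PM unfolding QP_def by auto
  have fB: "finite (Bset n)" using finite_PM unfolding Bset_def by auto
  have pt: "4 \<le> card (set_mset M) + (if M \<in> Bset n then 4 else 0)" if "M \<in> QP n" for M
    using that unfolding QP_def Bset_def by auto
  have "4 * card (QP n) = (\<Sum>M\<in>QP n. 4)" by simp
  also have "\<dots> \<le> (\<Sum>M\<in>QP n. card (set_mset M) + (if M \<in> Bset n then 4 else 0))"
    by (rule sum_mono) (rule pt)
  also have "\<dots> = (\<Sum>M\<in>QP n. card (set_mset M)) + (\<Sum>M\<in>QP n. (if M \<in> Bset n then 4 else 0))"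
    by (rule sum.distrib)
  also have "(\<Sum>M\<in>QP n. (if M \<in> Bset n then 4 else 0)) = (\<Sum>M\<in>{M\<in>QP n. M \<in> Bset n}. 4::nat)"
    by (simp only: sum.inter_filter[OF fQ])
  also have "\<dots> = 4 * card {M\<in>QP n. M \<in> Bset n}" by (simp add: mult.commute)
  also have "card {M\<in>QP n. M \<in> Bset n} \<le> card (Bset n)" by (rule card_mono[OF fB]) auto
  finally have "4 * card (QP n) \<le> (\<Sum>M\<in>QP n. card (set_mset M)) + 4 * card (Bset n)" by simp
  then have "4 * card (QP n) \<le> card (PM (n-1)) + 4 * (n+1)^6"
    using sum_card_set_QP[OF n] card_Bset[of n] by linarith
  then show ?thesis using card_PM_split[of n] card_Has1[OF n] by linarith
qed

lemma two_sum_range: "2 * \<Sum>{2..<m+2} = m * (m + 3::nat)"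
  by (induction m) (simp_all add: algebra_simps)

lemma lowerP:
  assumes "m * (m + 3) \<le> 2 * n"
  shows "2^m \<le> card (PM n)"
proof -
  define I where "I = {2..<m+2}"
  define g where "g = (\<lambda>S. mset_set S + replicate_mset (n - \<Sum>S) (1::nat))"
  have sI: "\<Sum>I \<le> n" using two_sum_range[of m] assms unfolding I_def by linarith
  have img: "g ` Pow I \<subseteq> PM n"
  proof
    fix z assume "z \<in> g ` Pow I"
    then obtain S where S: "S \<subseteq> I" "z = g S" by auto
    have fS: "finite S" using S(1) finite_subset unfolding I_def by blast
    have "\<Sum>S \<le> \<Sum>I" using S(1) by (rule sum_mono2[rotated]) (simp_all add: I_def)
    then have "\<Sum>S \<le> n" using sI by simp
    moreover have "sum_mset (mset_set S) = \<Sum>S" using fS by (simp add: sum_unfold_sum_mset)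
    ultimately have "sum_mset z = n" using S(2) unfolding g_def by (simp add: sum_mset_replicate_mset)
    moreover have "\<forall>x\<in>#z. 0 < x" using S fS unfolding g_def I_def by auto
    ultimately show "z \<in> PM n" unfolding PM_def by simp
  qed
  have inj: "inj_on g (Pow I)"
  proof (rule inj_onI)
    fix S1 S2 assume a: "S1 \<in> Pow I" "S2 \<in> Pow I" "g S1 = g S2"
    have key: "set_mset (filter_mset (\<lambda>x. 2 \<le> x) (g S)) = S" if "S \<in> Pow I" for S
    proof -
      have fS: "finite S" using that finite_subset unfolding I_def by blast
      have "filter_mset (\<lambda>x. 2 \<le> x) (mset_set S) = filter_mset (\<lambda>x. True) (mset_set S)"
        by (rule filter_mset_cong) (use that fS in \<open>auto simp: I_def\<close>)
      then have "filter_mset (\<lambda>x. 2 \<le> x) (mset_set S) = mset_set S" by simp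
      moreover have "filter_mset (\<lambda>x. 2 \<le> x) (replicate_mset k (1::nat)) = {#}" for k
        by (induction k) auto
      ultimately show ?thesis using fS unfolding g_def by auto
    qed
    show "S1 = S2" using key[OF a(1)] key[OF a(2)] a(3) by simp
  qed
  have "card (g ` Pow I) \<le> card (PM n)" by (rule card_mono[OF finite_PM img])
  moreover have "card (g ` Pow I) = 2^m" using card_image[OF inj] unfolding I_def by (simp add: card_Pow)
  ultimately show ?thesis by simp
qed




lemma ev_big: "eventually (\<lambda>n. 488 * (n+1)^6 \<le> 3 * card (PM n)) sequentially"
proof -
  have e1: "eventually (\<lambda>n::nat. 488 * (real n + 1)^6 \<le> 3 * 2 powr (sqrt (real n) - 1)) sequentially"
    by real_asymp
  have e2: "eventually (\<lambda>n::nat. 9 \<le> n) sequentially" by (rule eventually_ge_at_top)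
  show ?thesis using e1 e2
  proof eventually_elim
    case (elim n)
    define s where "s = sqrt (real n)"
    define m where "m = nat \<lfloor>s\<rfloor>"
    have s3: "3 \<le> s" using elim(2) real_sqrt_le_mono[of 9 "real n"] unfolding s_def by simp
    have ss: "s * s = real n" unfolding s_def by simp
    have mle: "real m \<le> s" unfolding m_def using s3 by simp
    have mge: "s - 1 \<le> real m" unfolding m_def using s3 by linarith
    have "real m * (real m + 3) \<le> s * (s + 3)" using mle s3 by (intro mult_mono) auto
    also have "\<dots> \<le> 2 * real n"
    proof -
      have "3 * s \<le> s * s" using s3 by (intro mult_right_mono) auto
      moreover have "s * (s + 3) = s * s + 3 * s" by (simp add: algebra_simps)
      ultimately show ?thesis using ss by linarith
    qed
    finally have "real (m * (m + 3)) \<le> real (2 * n)" by simp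
    then have "m * (m + 3) \<le> 2 * n" by (simp only: of_nat_le_iff)
    then have pm: "2^m \<le> card (PM n)" by (rule lowerP)
    have "2 powr (s - 1) \<le> 2 powr (real m)" by (rule powr_mono) (use mge in auto)
    also have "\<dots> = 2^m" by (simp add: powr_realpow)
    finally have "2 powr (s - 1) \<le> real (card (PM n))" using pm
      by (metis numeral_power_le_of_nat_cancel_iff order_trans)
    then have "488 * (real n + 1)^6 \<le> 3 * real (card (PM n))" using elim(1) unfolding s_def by linarith
    moreover have "real (488 * (n+1)^6) = 488 * (real n + 1)^6" by (simp add: add.commute)
    ultimately have "real (488 * (n+1)^6) \<le> real (3 * card (PM n))" by simp
    then show ?case by (simp only: of_nat_le_iff)
  qed
qed

lemma ev_ratio: "eventually (\<lambda>n. card (PM n) \<le> 2 * card (PM (n-3))) sequentially"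
  using ev_big eventually_ge_at_top[of 3]
proof eventually_elim
  case (elim n)
  define X where "X = (n+1)^6"
  have r1: "4 * card (PM n) \<le> 5 * card (PM (n-1)) + 4 * X"
    unfolding X_def using recur[of n] elim(2) by simp
  have "4 * card (PM (n-1)) \<le> 5 * card (PM (n-1-1)) + 4 * (n-1+1)^6"
    using recur[of "n-1"] elim(2) by simp
  moreover have "(n-1+1)^6 \<le> X" unfolding X_def by (rule power_mono) auto
  moreover have "n-1-1 = n-2" by simp
  ultimately have r2: "4 * card (PM (n-1)) \<le> 5 * card (PM (n-2)) + 4 * X" by simp
  have "4 * card (PM (n-2)) \<le> 5 * card (PM (n-2-1)) + 4 * (n-2+1)^6"
    using recur[of "n-2"] elim(2) by simp
  moreover have "(n-2+1)^6 \<le> X" unfolding X_def by (rule power_mono) auto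
  moreover have "n-2-1 = n-3" by simp
  ultimately have r3: "4 * card (PM (n-2)) \<le> 5 * card (PM (n-3)) + 4 * X" by simp
  have big: "488 * X \<le> 3 * card (PM n)" using elim(1) unfolding X_def .
  show ?case using r1 r2 r3 big by linarith
qed

lemma map_deg_eq:
  "map_deg bulgarian (Part n) (Part n)
   = real (card {(x,x'). x \<in> Part n \<and> x' \<in> Part n \<and> bulgarian x = bulgarian x'}) / real (card (Part n))"
  unfolding map_deg_def
  using sum_sq_fibers[of "Part n" "Part n" bulgarian] finite_Part bulgarian_Part by auto

theorem mainTheorem14:
  shows "liminf (\<lambda>n. ereal (map_deg bulgarian (Part n) (Part n))) \<ge> 2
       \<and> (\<forall>n::nat. n \<ge> 1 \<longrightarrow>
           map_deg bulgarian (Part n) (Part n)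
             \<le> of_int \<lfloor>(1 + sqrt (8 / 3 * real n + 1)) / 2\<rfloor>)"
proof (rule conjI)
  show "liminf (\<lambda>n. ereal (map_deg bulgarian (Part n) (Part n))) \<ge> 2"
  proof (rule Liminf_bounded)
    show "eventually (\<lambda>n. 2 \<le> ereal (map_deg bulgarian (Part n) (Part n))) sequentially"
      using ev_ratio eventually_ge_at_top[of 3]
    proof eventually_elim
      case (elim n)
      define E where "E = card {(x,x'). x \<in> Part n \<and> x' \<in> Part n \<and> bulgarian x = bulgarian x'}"
      have lp: "card (Part n) + 2 * card (Part (n-3)) \<le> E" unfolding E_def by (rule lower_pairs[OF elim(2)])
      have "2 * card (Part n) \<le> E" using lp elim(1) by (simp add: card_Part)
      then have le: "2 * real (card (Part n)) \<le> real E" by (metis of_nat_le_iff of_nat_mult of_nat_numeral)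
      have "[n] \<in> Part n" using elim(2) unfolding Part_def by auto
      then have P0: "0 < real (card (Part n))" using finite_Part card_gt_0_iff by fastforce
      have "2 \<le> real E / real (card (Part n))" using le P0 by (simp add: field_simps)
      then have "2 \<le> map_deg bulgarian (Part n) (Part n)" unfolding map_deg_eq E_def .
      then show ?case by simp
    qed
  qed
next
  show "\<forall>n::nat. n \<ge> 1 \<longrightarrow> map_deg bulgarian (Part n) (Part n)
             \<le> of_int \<lfloor>(1 + sqrt (8 / 3 * real n + 1)) / 2\<rfloor>"
    using upper_bound by blast
qed


end
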